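(* Let $F>1$ and $s>0$ be constants. Consider the self-adjusting $(1,\lambda)$ EA (defined in the context) with update strength $F$ and success rate $s$, using either standard bit mutation with mutation probability $p\in O(1/n)\cap n^{-O(1)}$ or the heavy-tailed mutation operator with a constant $\beta>1$, on an everywhere hard function $f$ with constant $\varepsilon$ and $d+1=n^{o(\log n)}$ function values. Let $\gamma>1$ be a constant such that $p_x^-\le\gamma^{-1}$ for all non-optimal $x$, and define \[\lambda_1:=4\max\left(\log_\gamma(2d(s+1)),\,\log_\gamma(n\log n)\right),\qquad \lambda_2:=n^{\varepsilon/2}.\] Consider the algorithm at some time $t^*$ with $\lambda_{t^*}\ge\lambda_2$. Then the probability that within the next $n^{o(\log n)}$ generations the offspring population size drops below $\lambda_1$ is at most $n^{-\Omega(\log n)}$.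
   Context: Search space $\{0,1\}^n$; asymptotics with respect to $n\to\infty$. W.l.o.g. $f$ takes values in $\{0,\dots,d\}$ with global optima at value $d$. Self-adjusting $(1,\lambda)$ EA: maintains a search point $x$ and real-valued $\lambda$ (rounded to a nearest integer when needed); $\lambda_t$ is the value in generation $t$. Each generation creates $\lambda$ offspring independently by mutating $x$, picks an offspring $y$ of maximum fitness (ties uniformly at random), sets $x\leftarrow y$ in any case, and sets $\lambda\leftarrow\max\{1,\lambda/F\}$ if $f(y)>f(x)$ and $\lambda\leftarrow F^{1/s}\lambda$ otherwise. Standard bit mutation with probability $p$ flips each bit independently with probability $p$. Heavy-tailed mutation with $\beta>1$ draws $\chi\in\{1,\dots,n/2\}$ with $\Pr[\chi=i]=i^{-\beta}/\sum_{j=1}^{n/2}j^{-\beta}$ and then does standard bit mutation with probability $\chi/n$. For these operators such a constant $\gamma>1$ exists. $p_x^+$ (resp. $p_x^-$) is the probability that a single offspring of $x$ has strictly larger (resp. smaller) fitness than $x$; $p_{\max}:=\max\{p_x^+ : f(x)<d\}$. $f$ is everywhere hard with constant $\varepsilon\in(0,1)$ if $p_{\max}=O(n^{-\varepsilon})$. *)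

theory Defs
  imports "HOL-Probability.Probability" "HOL-Library.Landau_Symbols"
begin

type_synonym bitstr = "nat \<Rightarrow> bool"
type_synonym ea_state = "bitstr \<times> real"

text \<open>Search space {0,1}^n: bit strings x with x i = False for i >= n.\<close>
definition space :: "nat \<Rightarrow> bitstr set" where
  "space n = {x. \<forall>i\<ge>n. \<not> x i}"

definition sbm :: "nat \<Rightarrow> real \<Rightarrow> bitstr \<Rightarrow> bitstr pmf" where
  "sbm n p x = map_pmf (\<lambda>b i. x i \<noteq> b i) (Pi_pmf {..<n} False (\<lambda>_. bernoulli_pmf p))"

definition power_law :: "nat \<Rightarrow> real \<Rightarrow> nat pmf" where
  "power_law n \<beta> = embed_pmf (\<lambda>i. if 1 \<le> i \<and> i \<le> n div 2
      then real i powr (-\<beta>) / (\<Sum>j=1..n div 2. real j powr (-\<beta>)) else 0)"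

definition heavy_tailed :: "nat \<Rightarrow> real \<Rightarrow> bitstr \<Rightarrow> bitstr pmf" where
  "heavy_tailed n \<beta> x = bind_pmf (power_law n \<beta>) (\<lambda>chi. sbm n (real chi / real n) x)"

definition p_plus :: "(bitstr \<Rightarrow> nat) \<Rightarrow> (bitstr \<Rightarrow> bitstr pmf) \<Rightarrow> bitstr \<Rightarrow> real" where
  "p_plus f mut x = measure_pmf.prob (mut x) {y. f y > f x}"

definition p_minus :: "(bitstr \<Rightarrow> nat) \<Rightarrow> (bitstr \<Rightarrow> bitstr pmf) \<Rightarrow> bitstr \<Rightarrow> real" where
  "p_minus f mut x = measure_pmf.prob (mut x) {y. f y < f x}"

definition p_max :: "(nat \<Rightarrow> bitstr \<Rightarrow> nat) \<Rightarrow> (nat \<Rightarrow> nat) \<Rightarrow> (nat \<Rightarrow> bitstr \<Rightarrow> bitstr pmf) \<Rightarrow> nat \<Rightarrow> real" where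
  "p_max f d mut n = (let S = {x \<in> space n. f n x < d n} in
     if S = {} then 0 else Max (p_plus (f n) (mut n) ` S))"

definition everywhere_hard :: "(nat \<Rightarrow> bitstr \<Rightarrow> nat) \<Rightarrow> (nat \<Rightarrow> nat) \<Rightarrow> (nat \<Rightarrow> bitstr \<Rightarrow> bitstr pmf) \<Rightarrow> real \<Rightarrow> bool" where
  "everywhere_hard f d mut \<epsilon> \<longleftrightarrow> 0 < \<epsilon> \<and> \<epsilon> < 1 \<and>
     p_max f d mut \<in> O(\<lambda>n. real n powr (-\<epsilon>))"

definition best_offspring :: "(bitstr \<Rightarrow> nat) \<Rightarrow> (bitstr \<Rightarrow> bitstr pmf) \<Rightarrow> nat \<Rightarrow> bitstr \<Rightarrow> bitstr pmf" where
  "best_offspring f mut k x =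
     bind_pmf (Pi_pmf {..<k} x (\<lambda>_. mut x)) (\<lambda>ys.
       let m = Max ((\<lambda>i. f (ys i)) ` {..<k}) in
       map_pmf ys (pmf_of_set {i. i < k \<and> f (ys i) = m}))"

definition ea_step :: "real \<Rightarrow> real \<Rightarrow> (bitstr \<Rightarrow> nat) \<Rightarrow> (bitstr \<Rightarrow> bitstr pmf) \<Rightarrow> ea_state \<Rightarrow> ea_state pmf" where
  "ea_step F s f mut st = (case st of (x, lam) \<Rightarrow>
     map_pmf (\<lambda>y. (y, if f y > f x then max 1 (lam / F) else F powr (1 / s) * lam))
       (best_offspring f mut (nat (round lam)) x))"

primrec traj :: "('a \<Rightarrow> 'a pmf) \<Rightarrow> nat \<Rightarrow> 'a \<Rightarrow> 'a list pmf" where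
  "traj step 0 st = return_pmf [st]"
| "traj step (Suc t) st = bind_pmf (step st) (\<lambda>st'. map_pmf (Cons st) (traj step t st'))"

definition lambda1 :: "real \<Rightarrow> real \<Rightarrow> nat \<Rightarrow> nat \<Rightarrow> real" where
  "lambda1 \<gamma> s dn n = 4 * max (log \<gamma> (2 * real dn * (s + 1))) (log \<gamma> (real n * ln (real n)))"

definition lambda2 :: "real \<Rightarrow> nat \<Rightarrow> real" where
  "lambda2 \<epsilon> n = real n powr (\<epsilon> / 2)"

end

theory Submission
  imports Defs "HOL-Real_Asymp.Real_Asymp"
begin

lemma finite_space: "finite (space n)"
proof -
  have "inj_on (\<lambda>x. {i. x i}) (space n)" by (auto simp: inj_on_def fun_eq_iff)
  moreover have "(\<lambda>x. {i. x i}) ` space n \<subseteq> Pow {..<n}" by (auto simp: space_def not_le[symmetric])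
  ultimately show ?thesis by (meson finite_Pow_iff finite_lessThan finite_subset inj_on_finite)
qed

lemma sbm_space: "x \<in> space n \<Longrightarrow> set_pmf (sbm n p x) \<subseteq> space n"
  unfolding sbm_def using set_Pi_pmf_subset[of "{..<n}" False "\<lambda>_. bernoulli_pmf p"]
  by (auto simp: space_def)

lemma heavy_space: "x \<in> space n \<Longrightarrow> set_pmf (heavy_tailed n b x) \<subseteq> space n"
  unfolding heavy_tailed_def using sbm_space by auto

lemma S_ne:
  fixes g :: "nat \<Rightarrow> nat"
  assumes "k \<ge> 1"
  shows "finite {i. i < k \<and> g i = Max (g ` {..<k})} \<and> {i. i < k \<and> g i = Max (g ` {..<k})} \<noteq> {}"
proof -
  have "{..<k} \<noteq> {}" using assms by (simp add: lessThan_empty_iff)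
  then have "Max (g ` {..<k}) \<in> g ` {..<k}" by (intro Max_in) auto
  then show ?thesis by auto
qed

lemma Pi_comp_set:
  fixes k :: nat
  assumes "ys \<in> set_pmf (Pi_pmf {..<k} d p)" "i < k"
  shows "ys i \<in> set_pmf (p i)"
proof -
  have "ys i \<in> set_pmf (map_pmf (\<lambda>f. f i) (Pi_pmf {..<k} d p))" unfolding set_map_pmf using assms(1) by (rule imageI)
  moreover have "map_pmf (\<lambda>f. f i) (Pi_pmf {..<k} d p) = p i"
    using Pi_pmf_component[of "{..<k}" i d p] assms(2) by simp
  ultimately show ?thesis by simp
qed

lemma best_support:
  assumes "k \<ge> 1" "set_pmf (mut x) \<subseteq> Sp"
  shows "set_pmf (best_offspring f mut k x) \<subseteq> Sp"
proof
  fix y assume "y \<in> set_pmf (best_offspring f mut k x)"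
  then obtain ys i where ys: "ys \<in> set_pmf (Pi_pmf {..<k} x (\<lambda>_. mut x))"
    and i: "i \<in> {i. i < k \<and> f (ys i) = Max ((\<lambda>i. f (ys i)) ` {..<k})}" and y: "y = ys i"
    using S_ne[OF assms(1), of "\<lambda>i. f (ys i)" for ys]
    by (auto simp: best_offspring_def Let_def)
  then show "y \<in> Sp" using Pi_comp_set[OF ys] assms(2) by auto
qed

lemma best_success:
  assumes "k \<ge> 1"
  shows "emeasure (best_offspring f mut k x) {y. f y > f x} \<le> of_nat k * emeasure (mut x) {y. f y > f x}"
proof -
  let ?P = "Pi_pmf {..<k} x (\<lambda>_. mut x)"
  let ?A = "{ys. \<exists>i<k. f (ys i) > f x}"
  have "emeasure (best_offspring f mut k x) {y. f y > f x}
     = (\<integral>\<^sup>+ys. emeasure (map_pmf ys (pmf_of_set {i. i < k \<and> f (ys i) = Max ((\<lambda>i. f (ys i)) ` {..<k})})) {y. f y > f x} \<partial>?P)"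
    by (simp add: best_offspring_def Let_def)
  also have "\<dots> \<le> (\<integral>\<^sup>+ys. indicator ?A ys \<partial>?P)"
  proof (rule nn_integral_mono)
    fix ys
    show "emeasure (map_pmf ys (pmf_of_set {i. i < k \<and> f (ys i) = Max ((\<lambda>i. f (ys i)) ` {..<k})})) {y. f y > f x} \<le> indicator ?A ys"
    proof (cases "ys \<in> ?A")
      case True then show ?thesis by (simp add: measure_pmf.emeasure_le_1)
    next
      case False
      have "emeasure (map_pmf ys (pmf_of_set {i. i < k \<and> f (ys i) = Max ((\<lambda>i. f (ys i)) ` {..<k})})) {y. f y > f x} = 0"
        using S_ne[OF assms, of "\<lambda>i. f (ys i)"] False
        by (intro null_setsD1 in_null_sets_measure_pmfI) auto
      then show ?thesis by simp
    qed
  qed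
  also have "\<dots> = emeasure ?P ?A" by simp
  also have "?A = (\<Union>i<k. {ys. f (ys i) > f x})" by auto
  also have "emeasure ?P \<dots> \<le> (\<Sum>i<k. emeasure ?P {ys. f (ys i) > f x})"
    by (rule emeasure_subadditive_finite) auto
  also have "\<dots> = (\<Sum>i<k. emeasure (mut x) {y. f y > f x})"
  proof (rule sum.cong)
    fix i assume "i \<in> {..<k}"
    have "emeasure ?P {ys. f (ys i) > f x} = emeasure (map_pmf (\<lambda>f. f i) ?P) {y. f y > f x}" by simp
    also have "\<dots> = emeasure (mut x) {y. f y > f x}" using \<open>i \<in> {..<k}\<close> by (simp add: Pi_pmf_component)
    finally show "emeasure ?P {ys. f (ys i) > f x} = emeasure (mut x) {y. f y > f x}" .
  qed simp
  also have "\<dots> = of_nat k * emeasure (mut x) {y. f y > f x}" by simp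
  finally show ?thesis .
qed

definition Psi :: "real \<Rightarrow> real \<Rightarrow> real \<Rightarrow> real \<Rightarrow> real" where
  "Psi a b \<kappa> lam = (a / min lam b) powr \<kappa>"

lemma powr_anti:
  fixes u v a \<kappa> :: real
  assumes "0 < u" "u \<le> v" "0 \<le> a" "0 \<le> \<kappa>"
  shows "(a / v) powr \<kappa> \<le> (a / u) powr \<kappa>"
proof -
  have "a / v \<le> a / u" using assms by (intro frac_le) auto
  moreover have "0 \<le> a / v" using assms by auto
  ultimately show ?thesis using assms(4) by (intro powr_mono2) auto
qed

lemma round_bounds:
  assumes "lam \<ge> (1::real)"
  shows "nat (round lam) \<ge> 1" "real (nat (round lam)) \<le> 2 * lam"
proof -
  have "round lam \<ge> 1" using assms by (metis of_int_1 of_int_round_ge round_mono round_of_int)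
  then show "nat (round lam) \<ge> 1" by linarith
  have "real_of_int (round lam) \<le> lam + 1/2" using of_int_round_le by blast
  then show "real (nat (round lam)) \<le> 2 * lam" using \<open>round lam \<ge> 1\<close> assms by linarith
qed

lemma drift:
  fixes F s a b \<kappa> lam q0 :: real and mut :: "bitstr \<Rightarrow> bitstr pmf" and f :: "bitstr \<Rightarrow> nat"
  assumes F: "F > 1" and s: "s > 0" and a: "0 < a" and ab: "a \<le> b" and \<kappa>: "\<kappa> \<ge> 0"
    and lam: "lam \<ge> 1" and q0: "q0 \<ge> 0"
    and succ: "emeasure (mut x) {y. f y > f x} \<le> ennreal q0"
    and key: "2 * b * q0 * F powr \<kappa> + F powr (-\<kappa>/s) \<le> 1"
  shows "(\<integral>\<^sup>+st'. ennreal (Psi a b \<kappa> (snd st')) \<partial>ea_step F s f mut (x, lam))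
           \<le> ennreal (Psi a b \<kappa> lam + (F*a/b) powr \<kappa>)"
proof -
  define k where "k = nat (round lam)"
  have k1: "k \<ge> 1" and k2: "real k \<le> 2 * lam" using round_bounds[OF lam] by (auto simp: k_def)
  define L where "L = (\<lambda>y. if f y > f x then max 1 (lam / F) else F powr (1 / s) * lam)"
  have "(\<integral>\<^sup>+st'. ennreal (Psi a b \<kappa> (snd st')) \<partial>ea_step F s f mut (x, lam))
      = (\<integral>\<^sup>+y. ennreal (Psi a b \<kappa> (L y)) \<partial>best_offspring f mut k x)"
    by (simp add: ea_step_def k_def L_def)
  also have "\<dots> \<le> ennreal (Psi a b \<kappa> lam + (F*a/b) powr \<kappa>)"
  proof (cases "lam > b")
    case True
    have "(\<integral>\<^sup>+y. ennreal (Psi a b \<kappa> (L y)) \<partial>best_offspring f mut k x)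
        \<le> (\<integral>\<^sup>+y. ennreal ((F*a/b) powr \<kappa>) \<partial>best_offspring f mut k x)"
    proof (rule nn_integral_mono)
      fix y
      have "F powr (1/s) \<ge> 1" using F s by (simp add: ge_one_powr_ge_zero)
      then have "F powr (1/s) * lam \<ge> lam" using mult_right_mono[of 1 "F powr (1/s)" lam] lam by simp
      moreover have "lam \<ge> lam / F" using F lam by (simp add: divide_le_eq)
      ultimately have "L y \<ge> lam / F" unfolding L_def by auto
      then have "min (L y) b \<ge> b / F" using True F ab a
      proof -
        have "b / F < lam / F" using True F by (simp add: divide_strict_right_mono)
        moreover have "b / F \<le> b" using F a ab by (simp add: divide_le_eq)
        ultimately show ?thesis using \<open>L y \<ge> lam / F\<close> by linarith
      qed
      moreover have "b / F > 0" using a ab F by auto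
      ultimately have "Psi a b \<kappa> (L y) \<le> (a / (b / F)) powr \<kappa>"
        unfolding Psi_def using a \<kappa> by (intro powr_anti) auto
      also have "a / (b / F) = F*a/b" by simp
      finally show "ennreal (Psi a b \<kappa> (L y)) \<le> ennreal ((F*a/b) powr \<kappa>)" by (rule ennreal_leI)
    qed
    also have "\<dots> = ennreal ((F*a/b) powr \<kappa>)" by simp
    also have "\<dots> \<le> ennreal (Psi a b \<kappa> lam + (F*a/b) powr \<kappa>)"
      by (intro ennreal_leI) (simp add: Psi_def)
    finally show ?thesis .
  next
    case False
    define A where "A = (F * a / lam) powr \<kappa>"
    define B where "B = (a / lam) powr \<kappa> * F powr (-\<kappa>/s) + (a / b) powr \<kappa>"
    have lampos: "lam > 0" using lam by auto
    have "(\<integral>\<^sup>+y. ennreal (Psi a b \<kappa> (L y)) \<partial>best_offspring f mut k x)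
        \<le> (\<integral>\<^sup>+y. ennreal A * indicator {y. f y > f x} y + ennreal B \<partial>best_offspring f mut k x)"
    proof (rule nn_integral_mono)
      fix y
      show "ennreal (Psi a b \<kappa> (L y)) \<le> ennreal A * indicator {y. f y > f x} y + ennreal B"
      proof (cases "f y > f x")
        case True
        have "lam / F \<le> lam" using F lam by (simp add: divide_le_eq)
        then have "min (L y) b \<ge> lam / F" using True False unfolding L_def by auto
        moreover have "lam / F > 0" using lampos F by auto
        ultimately have "Psi a b \<kappa> (L y) \<le> (a / (lam / F)) powr \<kappa>"
          unfolding Psi_def using a \<kappa> by (intro powr_anti) auto
        also have "\<dots> = A" by (simp add: A_def mult.commute)
        finally have "Psi a b \<kappa> (L y) \<le> A" .
        then have "ennreal (Psi a b \<kappa> (L y)) \<le> ennreal A" by (rule ennreal_leI)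
        moreover have "ennreal A \<le> ennreal A + ennreal B" by simp
        ultimately have "ennreal (Psi a b \<kappa> (L y)) \<le> ennreal A + ennreal B" by (rule order.trans)
        then show ?thesis using True by simp
      next
        case nT: False
        have Ly: "L y = F powr (1/s) * lam" using nT by (simp add: L_def)
        have Fp: "F powr (1/s) > 0" using F by auto
        have e0: "a / (F powr (1/s) * lam) = (a / lam) * F powr (-1/s)"
          using Fp lampos by (simp add: powr_minus field_simps)
        have e1: "(a / (F powr (1/s) * lam)) powr \<kappa> = (a / lam) powr \<kappa> * F powr (-\<kappa>/s)"
        proof -
          have "((a / lam) * F powr (-1/s)) powr \<kappa> = (a / lam) powr \<kappa> * (F powr (-1/s)) powr \<kappa>"
            using a lampos by (intro powr_mult; simp)
          also have "(F powr (-1/s)) powr \<kappa> = F powr (-\<kappa>/s)" by (simp add: powr_powr)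
          finally show ?thesis unfolding e0 .
        qed
        have "Psi a b \<kappa> (L y) \<le> B"
        proof (cases "F powr (1/s) * lam \<le> b")
          case True
          then show ?thesis unfolding Psi_def Ly B_def using e1 by simp
        next
          case False
          then show ?thesis unfolding Psi_def Ly B_def using a lampos by simp
        qed
        then show ?thesis using nT by (simp add: ennreal_leI)
      qed
    qed
    also have "\<dots> = (\<integral>\<^sup>+y. ennreal A * indicator {y. f y > f x} y \<partial>best_offspring f mut k x) + (\<integral>\<^sup>+y. ennreal B \<partial>best_offspring f mut k x)"
      by (rule nn_integral_add) auto
    also have "\<dots> = ennreal A * emeasure (best_offspring f mut k x) {y. f y > f x} + ennreal B"
    proof -
      have i1: "(\<integral>\<^sup>+y. ennreal A * indicator {y. f y > f x} y \<partial>best_offspring f mut k x) = ennreal A * emeasure (best_offspring f mut k x) {y. f y > f x}"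
        by (rule nn_integral_cmult_indicator) simp
      have i2: "(\<integral>\<^sup>+y. ennreal B \<partial>best_offspring f mut k x) = ennreal B"
        by (simp add: measure_pmf.emeasure_space_1)
      show ?thesis by (simp only: i1 i2)
    qed
    also have "\<dots> \<le> ennreal A * (of_nat k * ennreal q0) + ennreal B"
    proof -
      have "emeasure (best_offspring f mut k x) {y. f y > f x} \<le> of_nat k * emeasure (mut x) {y. f y > f x}"
        by (rule best_success[OF k1])
      also have "\<dots> \<le> of_nat k * ennreal q0" using succ by (rule mult_left_mono) simp
      finally show ?thesis by (intro add_right_mono mult_left_mono) auto
    qed
    also have "\<dots> = ennreal (A * k * q0 + B)"
    proof -
      have "A \<ge> 0" "B \<ge> 0" by (auto simp: A_def B_def)
      then have "ennreal (A * k * q0 + B) = ennreal (A * k * q0) + ennreal B" using q0 by (intro ennreal_plus) auto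
      also have "ennreal (A * k * q0) = ennreal A * (ennreal (real k) * ennreal q0)"
        using \<open>A \<ge> 0\<close> q0 by (simp add: ennreal_mult mult.assoc)
      finally show ?thesis by (simp add: ennreal_of_nat_eq_real_of_nat)
    qed
    also have "\<dots> \<le> ennreal (Psi a b \<kappa> lam + (F*a/b) powr \<kappa>)"
    proof (rule ennreal_leI)
      have P: "Psi a b \<kappa> lam = (a / lam) powr \<kappa>" using False by (simp add: Psi_def min_def)
      have A': "A = F powr \<kappa> * (a / lam) powr \<kappa>" unfolding A_def
        using F a lampos by (simp add: powr_mult[symmetric] mult.assoc)
      have "A * k * q0 \<le> (a / lam) powr \<kappa> * (2 * b * q0 * F powr \<kappa>)"
      proof -
        have "A * k * q0 \<le> A * (2 * lam) * q0" using k2 q0 by (intro mult_right_mono mult_left_mono) (auto simp: A_def)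
        also have "\<dots> \<le> A * (2 * b) * q0" using False q0 by (intro mult_right_mono mult_left_mono) (auto simp: A_def)
        finally show ?thesis by (simp add: A' algebra_simps)
      qed
      then have "A * k * q0 + B \<le> (a / lam) powr \<kappa> * (2 * b * q0 * F powr \<kappa> + F powr (-\<kappa>/s)) + (a / b) powr \<kappa>"
        by (simp add: B_def algebra_simps)
      also have "\<dots> \<le> (a / lam) powr \<kappa> * 1 + (a / b) powr \<kappa>"
        using key by (intro add_mono mult_left_mono) auto
      also have "(a / b) powr \<kappa> \<le> (F * a / b) powr \<kappa>"
        using a ab F \<kappa> by (intro powr_mono2) (auto simp: field_simps)
      finally show "A * k * q0 + B \<le> Psi a b \<kappa> lam + (F*a/b) powr \<kappa>" using P by simp
    qed
    finally show ?thesis .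
  qed
  finally show ?thesis .
qed

lemma traj_bound:
  fixes step :: "'a \<Rightarrow> 'a pmf" and Inv bad :: "'a \<Rightarrow> bool" and Psi' :: "'a \<Rightarrow> real" and E0 :: real
  assumes inv: "\<And>st st'. Inv st \<Longrightarrow> \<not> bad st \<Longrightarrow> st' \<in> set_pmf (step st) \<Longrightarrow> Inv st'"
    and bad1: "\<And>st. Inv st \<Longrightarrow> bad st \<Longrightarrow> 1 \<le> Psi' st"
    and nn: "\<And>st. Inv st \<Longrightarrow> 0 \<le> Psi' st" and E0: "0 \<le> E0"
    and dr: "\<And>st. Inv st \<Longrightarrow> \<not> bad st \<Longrightarrow> (\<integral>\<^sup>+st'. ennreal (Psi' st') \<partial>step st) \<le> ennreal (Psi' st + E0)"
  shows "Inv st \<Longrightarrow> emeasure (traj step t st) {ss. \<exists>x\<in>set ss. bad x} \<le> ennreal (Psi' st + real t * E0)"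
proof (induction t arbitrary: st)
  case 0
  show ?case
  proof (cases "bad st")
    case True
    then have "emeasure (traj step 0 st) {ss. \<exists>x\<in>set ss. bad x} \<le> 1" by (simp add: measure_pmf.emeasure_le_1)
    also have "1 \<le> ennreal (Psi' st + real 0 * E0)" using bad1[OF 0 True] by simp
    finally show ?thesis .
  next
    case False
    then show ?thesis by simp
  qed
next
  case (Suc t)
  let ?B = "{ss. \<exists>x\<in>set ss. bad x}"
  have eq: "emeasure (traj step (Suc t) st) ?B = (\<integral>\<^sup>+st'. emeasure (traj step t st') (Cons st -` ?B) \<partial>step st)"
    by simp
  show ?case
  proof (cases "bad st")
    case True
    then have "Cons st -` ?B = UNIV" by auto
    then have "emeasure (traj step (Suc t) st) ?B = 1" unfolding eq by (simp add: measure_pmf.emeasure_space_1)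
    also have "1 \<le> ennreal (Psi' st + real (Suc t) * E0)"
    proof -
      have "0 \<le> real (Suc t) * E0" using E0 by simp
      then have "1 \<le> Psi' st + real (Suc t) * E0" using bad1[OF Suc.prems True] by linarith
      then have "ennreal 1 \<le> ennreal (Psi' st + real (Suc t) * E0)" by (rule ennreal_leI)
      then show ?thesis by simp
    qed
    finally show ?thesis by simp
  next
    case False
    then have "Cons st -` ?B = ?B" by auto
    then have "emeasure (traj step (Suc t) st) ?B = (\<integral>\<^sup>+st'. emeasure (traj step t st') ?B \<partial>step st)"
      unfolding eq by simp
    also have "\<dots> \<le> (\<integral>\<^sup>+st'. ennreal (Psi' st') + ennreal (real t * E0) \<partial>step st)"
    proof (rule nn_integral_mono_AE)
      show "AE st' in step st. emeasure (traj step t st') ?B \<le> ennreal (Psi' st') + ennreal (real t * E0)"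
      proof (rule AE_pmfI)
        fix st' assume "st' \<in> set_pmf (step st)"
        then have I: "Inv st'" using inv Suc.prems False by blast
        have "emeasure (traj step t st') ?B \<le> ennreal (Psi' st' + real t * E0)" by (rule Suc.IH[OF I])
        also have "\<dots> = ennreal (Psi' st') + ennreal (real t * E0)" using nn[OF I] E0 by (intro ennreal_plus) auto
        finally show "emeasure (traj step t st') ?B \<le> ennreal (Psi' st') + ennreal (real t * E0)" .
      qed
    qed
    also have "\<dots> = (\<integral>\<^sup>+st'. ennreal (Psi' st') \<partial>step st) + ennreal (real t * E0)"
      by (subst nn_integral_add) (auto simp: measure_pmf.emeasure_space_1)
    also have "\<dots> \<le> ennreal (Psi' st + E0) + ennreal (real t * E0)"
      using dr[OF Suc.prems False] by (rule add_right_mono)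
    also have "\<dots> = ennreal (Psi' st + real (Suc t) * E0)"
      using nn[OF Suc.prems] E0 by (subst ennreal_plus[symmetric]) (auto simp: algebra_simps)
    finally show ?thesis .
  qed
qed

lemma main_n:
  fixes F s \<epsilon> \<gamma> C :: real and n T :: nat and f :: "bitstr \<Rightarrow> nat" and dn :: nat
    and mut :: "bitstr \<Rightarrow> bitstr pmf"
  assumes F: "F > 1" and s: "s > 0" and \<gamma>: "\<gamma> > 1" and \<epsilon>: "\<epsilon> > 0" and C: "C > 0"
    and n3: "n \<ge> 4"
    and supp: "\<And>x. x \<in> space n \<Longrightarrow> set_pmf (mut x) \<subseteq> space n"
    and pp: "\<And>x. x \<in> space n \<Longrightarrow> emeasure (mut x) {y. f y > f x} \<le> ennreal (C * real n powr -\<epsilon>)"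
    and hd: "ln (real dn + 1) \<le> ln (real n) ^ 2"
    and hnl: "ln (real n * ln (real n)) \<le> ln (real n) ^ 2"
    and h1: "(ln (2 * (s + 1)) + ln (real n) ^ 2) * (4 * F / ln \<gamma>) \<le> real n powr (\<epsilon> / 4)"
    and h2: "2 * C * real n powr (-\<epsilon>/4) \<le> 1/2"
    and h3: "real n powr (- \<epsilon> / (4 * s)) \<le> 1/2"
    and h4: "ln (real T + 1) \<le> (\<epsilon> * (\<epsilon> / (4 * ln F)) / 8) * ln (real n) ^ 2"
    and x0: "x0 \<in> space n" and lam0: "lam0 \<ge> lambda2 \<epsilon> n"
  shows "measure_pmf.prob (traj (ea_step F s f mut) T (x0, lam0))
             {ss. \<exists>st \<in> set ss. snd st < lambda1 \<gamma> s dn n}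
           \<le> real n powr (- (\<epsilon> * (\<epsilon> / (4 * ln F)) / 8) * ln (real n))"
proof -
  define c0 where "c0 = \<epsilon> / (4 * ln F)"
  define c where "c = \<epsilon> * c0 / 8"
  define a where "a = lambda1 \<gamma> s dn n"
  define b where "b = lambda2 \<epsilon> n"
  define K where "K = ln (2 * (s + 1))"
  define \<kappa> where "\<kappa> = c0 * ln (real n)"
  define E0 where "E0 = (F * a / b) powr \<kappa>"
  define q0 where "q0 = C * real n powr -\<epsilon>"
  have lnF: "ln F > 0" using F by simp
  have lng: "ln \<gamma> > 0" using \<gamma> by simp
  have c0: "c0 > 0" using \<epsilon> lnF by (simp add: c0_def)
  have npos: "real n > 0" using n3 by simp
  have lnn1: "ln (real n) > 1"
  proof -
    have "exp 1 < (4::real)" using exp_le by linarith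
    then have "ln 4 > (1::real)" using ln_less_cancel_iff[of "exp 1" 4] by simp
    moreover have "ln (real n) \<ge> ln 4" using n3 by simp
    ultimately show ?thesis by linarith
  qed
  have \<kappa>: "\<kappa> \<ge> 0" using c0 lnn1 by (simp add: \<kappa>_def)
  have Kpos: "K > 0" using s by (simp add: K_def)
  have b_def': "b = real n powr (\<epsilon>/2)" by (simp add: b_def lambda2_def)
  have bpos: "b > 0" using npos by (simp add: b_def')
  have nl: "real n * ln (real n) > 1"
  proof -
    have "1 * 1 < real n * ln (real n)" using lnn1 n3 by (intro mult_strict_mono) auto
    then show ?thesis by simp
  qed
  have apos: "a > 0"
  proof -
    have "log \<gamma> (real n * ln (real n)) > 0" using nl \<gamma> by simp
    then show ?thesis unfolding a_def lambda1_def by linarith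
  qed
  have la1: "log \<gamma> (2 * real dn * (s + 1)) \<le> (K + ln (real n) ^ 2) / ln \<gamma>"
  proof (cases "dn = 0")
    case True
    then show ?thesis using Kpos lng by (simp add: log_def)
  next
    case False
    have "ln (2 * real dn * (s + 1)) = K + ln (real dn)" using False s
      by (simp add: K_def ln_mult mult.commute mult.left_commute)
    also have "ln (real dn) \<le> ln (real dn + 1)" using False by simp
    finally have "ln (2 * real dn * (s + 1)) \<le> K + ln (real n) ^ 2" using hd by linarith
    then show ?thesis unfolding log_def using lng by (intro divide_right_mono) auto
  qed
  have la2: "log \<gamma> (real n * ln (real n)) \<le> (K + ln (real n) ^ 2) / ln \<gamma>"
    unfolding log_def using lng hnl Kpos by (intro divide_right_mono) auto
  have a_le: "a \<le> 4 * (K + ln (real n) ^ 2) / ln \<gamma>"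
  proof -
    have "max (log \<gamma> (2 * real dn * (s + 1))) (log \<gamma> (real n * ln (real n))) \<le> (K + ln (real n) ^ 2) / ln \<gamma>"
      using la1 la2 by simp
    then have "4 * max (log \<gamma> (2 * real dn * (s + 1))) (log \<gamma> (real n * ln (real n))) \<le> 4 * ((K + ln (real n) ^ 2) / ln \<gamma>)"
      by (rule mult_left_mono) auto
    then show ?thesis unfolding a_def lambda1_def by (simp only: times_divide_eq_right)
  qed
  have Fab: "F * a / b \<le> real n powr (-\<epsilon>/4)"
  proof -
    have "F * a \<le> F * (4 * (K + ln (real n) ^ 2) / ln \<gamma>)"
      by (rule mult_left_mono) (use a_le F in auto)
    also have "\<dots> = (K + ln (real n) ^ 2) * (4 * F / ln \<gamma>)"
      using lng by (simp add: field_simps)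
    also have "\<dots> \<le> real n powr (\<epsilon> / 4)" using h1 by (simp add: K_def)
    finally have "F * a / b \<le> real n powr (\<epsilon> / 4) / real n powr (\<epsilon>/2)"
      using bpos by (simp add: b_def' divide_right_mono)
    also have "\<dots> = real n powr (-\<epsilon>/4)" using npos by (simp add: powr_diff[symmetric])
    finally show ?thesis .
  qed
  have ab: "a \<le> b"
  proof -
    have "real n powr (-\<epsilon>/4) \<le> real n powr 0" using \<epsilon> n3 by (intro powr_mono) auto
    then have "real n powr (-\<epsilon>/4) \<le> 1" using npos by simp
    moreover have "F * a \<le> real n powr (-\<epsilon>/4) * b" using Fab bpos by (simp add: divide_le_eq)
    moreover have "real n powr (-\<epsilon>/4) * b \<le> 1 * b" using bpos calculation(1) by (intro mult_right_mono) auto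
    ultimately have "F * a \<le> b" by simp
    moreover have "1 * a \<le> F * a" using F apos by (intro mult_right_mono) auto
    ultimately show ?thesis by simp
  qed
  have Fk: "F powr \<kappa> = real n powr (\<epsilon>/4)"
    using F npos lnF by (simp add: powr_def \<kappa>_def c0_def)
  have Fks: "F powr (-\<kappa>/s) = real n powr (- \<epsilon> / (4 * s))"
    using F npos lnF s by (simp add: powr_def \<kappa>_def c0_def)
  have key: "2 * b * q0 * F powr \<kappa> + F powr (-\<kappa>/s) \<le> 1"
  proof -
    have "2 * b * q0 * F powr \<kappa> = 2 * C * (real n powr (\<epsilon>/2) * real n powr -\<epsilon> * real n powr (\<epsilon>/4))"
      by (simp add: b_def' q0_def Fk)
    also have "real n powr (\<epsilon>/2) * real n powr -\<epsilon> * real n powr (\<epsilon>/4) = real n powr (-\<epsilon>/4)"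
      by (simp add: powr_add[symmetric])
    finally show ?thesis using h2 h3 Fks by simp
  qed
  let ?Inv = "\<lambda>st :: ea_state. fst st \<in> space n \<and> snd st \<ge> 1"
  let ?bad = "\<lambda>st :: ea_state. snd st < a"
  let ?Psi = "\<lambda>st :: ea_state. Psi a b \<kappa> (snd st)"
  have lam0_1: "lam0 \<ge> 1"
  proof -
    have "1 \<le> real n powr (\<epsilon>/2)" using n3 \<epsilon> by (intro ge_one_powr_ge_zero) auto
    then show ?thesis using lam0 by (simp add: lambda2_def)
  qed
  have tb: "emeasure (traj (ea_step F s f mut) T (x0, lam0)) {ss. \<exists>x\<in>set ss. ?bad x}
          \<le> ennreal (?Psi (x0, lam0) + real T * E0)"
  proof (rule traj_bound[where Inv = ?Inv])
    fix st st' :: ea_state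
    assume I: "?Inv st" and "\<not> ?bad st" and st': "st' \<in> set_pmf (ea_step F s f mut st)"
    obtain x lam where st: "st = (x, lam)" by (cases st)
    have k1: "nat (round lam) \<ge> 1" using round_bounds I st by auto
    have "set_pmf (best_offspring f mut (nat (round lam)) x) \<subseteq> space n"
      using best_support[OF k1 supp] I st by auto
    moreover have "F powr (1/s) * lam \<ge> 1"
    proof -
      have "F powr (1/s) \<ge> 1" using F s by (simp add: ge_one_powr_ge_zero)
      then show ?thesis using I st mult_mono[of 1 "F powr (1/s)" 1 lam] by simp
    qed
    ultimately show "?Inv st'" using st' st by (auto simp: ea_step_def)
  next
    fix st :: ea_state assume I: "?Inv st" and "?bad st"
    then have "a / min (snd st) b \<ge> 1" using ab by (simp add: min_def)
    then show "1 \<le> ?Psi st" unfolding Psi_def using \<kappa> by (simp add: ge_one_powr_ge_zero)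
  next
    fix st :: ea_state assume "?Inv st" show "0 \<le> ?Psi st" by (simp add: Psi_def)
  next
    show "0 \<le> E0" by (simp add: E0_def)
  next
    fix st :: ea_state assume I: "?Inv st" and "\<not> ?bad st"
    obtain x lam where st: "st = (x, lam)" by (cases st)
    have "(\<integral>\<^sup>+st'. ennreal (Psi a b \<kappa> (snd st')) \<partial>ea_step F s f mut (x, lam))
           \<le> ennreal (Psi a b \<kappa> lam + (F*a/b) powr \<kappa>)"
      by (rule drift[OF F s apos ab \<kappa> _ _ _ key]) (use I st pp C npos in \<open>auto simp: q0_def\<close>)
    then show "(\<integral>\<^sup>+st'. ennreal (?Psi st') \<partial>ea_step F s f mut st) \<le> ennreal (?Psi st + E0)"
      by (simp add: st E0_def)
  next
    show "?Inv (x0, lam0)" using x0 lam0_1 by simp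
  qed
  have Psi0: "?Psi (x0, lam0) \<le> E0"
  proof -
    have "?Psi (x0, lam0) = (a / b) powr \<kappa>" using lam0 by (simp add: Psi_def b_def min_def)
    also have "\<dots> \<le> E0" unfolding E0_def using apos bpos F \<kappa> by (intro powr_mono2) (auto simp: field_simps)
    finally show ?thesis .
  qed
  have E0b: "E0 \<le> real n powr (-2 * c * ln (real n))"
  proof -
    have "E0 \<le> (real n powr (-\<epsilon>/4)) powr \<kappa>"
      unfolding E0_def using Fab apos bpos F \<kappa> by (intro powr_mono2) auto
    also have "\<dots> = real n powr (-2 * c * ln (real n))"
      by (simp add: powr_powr \<kappa>_def c_def mult.assoc)
    finally show ?thesis .
  qed
  have Tb: "real T + 1 \<le> real n powr (c * ln (real n))"
  proof -
    have h4': "ln (real T + 1) \<le> c * ln (real n) ^ 2" using h4 by (simp add: c_def c0_def)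
    have "real T + 1 = exp (ln (real T + 1))" by simp
    also have "\<dots> \<le> exp (c * ln (real n) ^ 2)" using h4' by (simp only: exp_le_cancel_iff)
    also have "\<dots> = real n powr (c * ln (real n))" using npos by (simp add: powr_def power2_eq_square)
    finally show ?thesis .
  qed
  have "?Psi (x0, lam0) + real T * E0 \<le> (real T + 1) * E0" using Psi0 by (simp add: algebra_simps)
  also have "\<dots> \<le> real n powr (c * ln (real n)) * real n powr (-2 * c * ln (real n))"
    using Tb E0b by (intro mult_mono) (auto simp: E0_def)
  also have "\<dots> = real n powr (- c * ln (real n))" by (simp add: powr_add[symmetric])
  finally have fin: "?Psi (x0, lam0) + real T * E0 \<le> real n powr (- c * ln (real n))" .
  have "ennreal (measure_pmf.prob (traj (ea_step F s f mut) T (x0, lam0)) {ss. \<exists>x\<in>set ss. ?bad x})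
         \<le> ennreal (real n powr (- c * ln (real n)))"
  proof -
    have "ennreal (measure_pmf.prob (traj (ea_step F s f mut) T (x0, lam0)) {ss. \<exists>x\<in>set ss. ?bad x})
        = emeasure (traj (ea_step F s f mut) T (x0, lam0)) {ss. \<exists>x\<in>set ss. ?bad x}"
      by (simp add: measure_pmf.emeasure_eq_measure)
    also note tb
    also have "ennreal (?Psi (x0, lam0) + real T * E0) \<le> ennreal (real n powr (- c * ln (real n)))"
      using fin by (rule ennreal_leI)
    finally show ?thesis .
  qed
  then have "measure_pmf.prob (traj (ea_step F s f mut) T (x0, lam0)) {ss. \<exists>x\<in>set ss. ?bad x}
         \<le> real n powr (- c * ln (real n))" by (subst (asm) ennreal_le_iff) auto
  then show ?thesis by (simp add: a_def c_def c0_def)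
qed


lemma asy1: "(e::real) > 0 \<Longrightarrow> eventually (\<lambda>n::nat. (K + ln (real n) ^2) * M \<le> real n powr e) at_top"
  by real_asymp

lemma asy2: "(e::real) > 0 \<Longrightarrow> eventually (\<lambda>n::nat. A * real n powr (-e) \<le> 1/2) at_top"
  by real_asymp

lemma asy3: "(e::real) > 0 \<Longrightarrow> eventually (\<lambda>n::nat. B \<le> e * ln (real n) ^ 2) at_top"
  by real_asymp

lemma asy4: "eventually (\<lambda>n::nat. ln (real n * ln (real n)) \<le> ln (real n) ^ 2) at_top"
  by real_asymp

theorem lemma3p3:
  fixes F s \<epsilon> \<gamma> :: real
    and f :: "nat \<Rightarrow> bitstr \<Rightarrow> nat" and d :: "nat \<Rightarrow> nat"
    and mut :: "nat \<Rightarrow> bitstr \<Rightarrow> bitstr pmf" and T :: "nat \<Rightarrow> nat"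
  assumes F: "F > 1" and s: "s > 0"
    and mut_op: "(\<exists>p :: nat \<Rightarrow> real. (\<forall>n. 0 \<le> p n \<and> p n \<le> 1)
                    \<and> p \<in> O(\<lambda>n. 1 / real n)
                    \<and> (\<exists>c. eventually (\<lambda>n. p n \<ge> real n powr (-c)) at_top)
                    \<and> mut = (\<lambda>n. sbm n (p n)))
               \<or> (\<exists>\<beta> > 1. mut = (\<lambda>n. heavy_tailed n \<beta>))"
    and f_range: "\<And>n x. x \<in> space n \<Longrightarrow> f n x \<le> d n"
    and f_opt: "\<And>n. \<exists>x \<in> space n. f n x = d n"
    and hard: "everywhere_hard f d mut \<epsilon>"
    and d_vals: "(\<lambda>n. ln (real (d n) + 1)) \<in> o(\<lambda>n. (ln (real n))\<^sup>2)"
    and \<gamma>: "\<gamma> > 1"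
    and p_minus_bound: "eventually (\<lambda>n. \<forall>x \<in> space n. f n x < d n \<longrightarrow>
                          p_minus (f n) (mut n) x \<le> 1 / \<gamma>) at_top"
    and T: "(\<lambda>n. ln (real (T n))) \<in> o(\<lambda>n. (ln (real n))\<^sup>2)"
  shows "\<exists>c > 0. eventually (\<lambda>n. \<forall>x0 \<in> space n. \<forall>lam0. lam0 \<ge> lambda2 \<epsilon> n \<longrightarrow>
           measure_pmf.prob (traj (ea_step F s (f n) (mut n)) (T n) (x0, lam0))
             {ss. \<exists>st \<in> set ss. snd st < lambda1 \<gamma> s (d n) n}
           \<le> real n powr (- c * ln (real n))) at_top"
proof -
  from hard have \<epsilon>: "0 < \<epsilon>" "\<epsilon> < 1" and pO: "p_max f d mut \<in> O(\<lambda>n. real n powr (-\<epsilon>))"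
    by (auto simp: everywhere_hard_def)
  obtain C where C: "C > 0" and evC: "eventually (\<lambda>n. norm (p_max f d mut n) \<le> C * norm (real n powr (-\<epsilon>))) at_top"
    using landau_o.bigE[OF pO] by blast
  have supp: "set_pmf (mut n x) \<subseteq> space n" if "x \<in> space n" for n x
    using mut_op sbm_space[OF that] heavy_space[OF that] by auto
  have pp: "emeasure (mut n x) {y. f n y > f n x} \<le> ennreal (C * real n powr -\<epsilon>)"
    if pm: "p_max f d mut n \<le> C * real n powr -\<epsilon>" and x: "x \<in> space n" for n x
  proof (cases "f n x < d n")
    case True
    define S where "S = {x \<in> space n. f n x < d n}"
    have xS: "x \<in> S" using True x by (simp add: S_def)
    have fS: "finite S" using finite_space[of n] by (simp add: S_def)
    have "p_plus (f n) (mut n) x \<le> Max (p_plus (f n) (mut n) ` S)"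
      using fS xS by (intro Max_ge) auto
    also have "\<dots> = p_max f d mut n" using xS by (auto simp: p_max_def S_def Let_def)
    finally have "measure_pmf.prob (mut n x) {y. f n y > f n x} \<le> C * real n powr -\<epsilon>"
      using pm by (simp add: p_plus_def)
    then show ?thesis by (simp add: measure_pmf.emeasure_eq_measure ennreal_leI)
  next
    case False
    have "{y. f n y > f n x} \<inter> set_pmf (mut n x) = {}"
      using supp[OF x] f_range False by fastforce
    then have "emeasure (mut n x) {y. f n y > f n x} = 0"
      by (intro null_setsD1 in_null_sets_measure_pmfI)
    then show ?thesis by simp
  qed
  define c where "c = \<epsilon> * (\<epsilon> / (4 * ln F)) / 8"
  have lnF: "ln F > 0" using F by simp
  have cpos: "c > 0" using \<epsilon> lnF by (simp add: c_def)
  have E_pm: "eventually (\<lambda>n. p_max f d mut n \<le> C * real n powr -\<epsilon>) at_top"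
    using evC by eventually_elim simp
  have E_d: "eventually (\<lambda>n. ln (real (d n) + 1) \<le> ln (real n) ^ 2) at_top"
    using landau_o.smallD[OF d_vals zero_less_one] by eventually_elim simp
  have E_T: "eventually (\<lambda>n. \<bar>ln (real (T n))\<bar> \<le> (c/2) * ln (real n) ^ 2) at_top"
  proof -
    have cp2: "c/2 > 0" using cpos by simp
    show ?thesis using landau_o.smallD[OF T cp2] by eventually_elim simp
  qed
  have E_nl: "eventually (\<lambda>n. ln (real n * ln (real n)) \<le> ln (real n) ^ 2) at_top"
    by (rule asy4)
  have E_h1: "eventually (\<lambda>n. (ln (2 * (s + 1)) + ln (real n) ^ 2) * (4 * F / ln \<gamma>) \<le> real n powr (\<epsilon> / 4)) at_top"
    by (rule asy1) (use \<epsilon> in simp)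
  have E_h2: "eventually (\<lambda>n. 2 * C * real n powr (-\<epsilon>/4) \<le> 1/2) at_top"
  proof -
    have e1: "-\<epsilon>/4 = -(\<epsilon>/4)" by simp
    show ?thesis unfolding e1 by (rule asy2) (use \<epsilon> in simp)
  qed
  have E_h3: "eventually (\<lambda>n. real n powr (- \<epsilon> / (4 * s)) \<le> 1/2) at_top"
  proof -
    have e1: "- \<epsilon> / (4 * s) = -(\<epsilon> / (4 * s))" by simp
    have "eventually (\<lambda>n::nat. 1 * real n powr (-(\<epsilon> / (4 * s))) \<le> 1/2) at_top"
      by (rule asy2) (use \<epsilon> s in simp)
    then show ?thesis unfolding e1 by simp
  qed
  have E_ln2: "eventually (\<lambda>n. ln 2 \<le> (c/2) * ln (real n) ^ 2) at_top"
    by (rule asy3) (use cpos in simp)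
  have E_4: "eventually (\<lambda>n::nat. n \<ge> 4) at_top" by (rule eventually_ge_at_top)
  have "eventually (\<lambda>n. \<forall>x0 \<in> space n. \<forall>lam0. lam0 \<ge> lambda2 \<epsilon> n \<longrightarrow>
           measure_pmf.prob (traj (ea_step F s (f n) (mut n)) (T n) (x0, lam0))
             {ss. \<exists>st \<in> set ss. snd st < lambda1 \<gamma> s (d n) n}
           \<le> real n powr (- c * ln (real n))) at_top"
    using E_pm E_d E_T E_nl E_h1 E_h2 E_h3 E_ln2 E_4
  proof eventually_elim
    case (elim n)
    have h4: "ln (real (T n) + 1) \<le> c * ln (real n) ^ 2"
    proof (cases "T n = 0")
      case True
      then show ?thesis using cpos by simp
    next
      case False
      then have "real (T n) + 1 \<le> 2 * real (T n)" by simp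
      then have "ln (real (T n) + 1) \<le> ln (2 * real (T n))" by simp
      also have "\<dots> = ln 2 + ln (real (T n))" using False by (simp add: ln_mult)
      also have "\<dots> \<le> c * ln (real n) ^ 2" using elim(3) elim(8) by linarith
      finally show ?thesis .
    qed
    show ?case
    proof (intro ballI allI impI)
      fix x0 lam0 assume x0: "x0 \<in> space n" and lam0: "lam0 \<ge> lambda2 \<epsilon> n"
      show "measure_pmf.prob (traj (ea_step F s (f n) (mut n)) (T n) (x0, lam0))
             {ss. \<exists>st \<in> set ss. snd st < lambda1 \<gamma> s (d n) n}
           \<le> real n powr (- c * ln (real n))"
        unfolding c_def
        by (rule main_n[OF F s \<gamma> \<epsilon>(1) C elim(9) supp pp[OF elim(1)] elim(2) elim(4) elim(5) elim(6) elim(7) _ x0 lam0])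
           (use h4 in \<open>simp_all add: c_def\<close>)
    qed
  qed
  then show ?thesis using cpos by blast
qed

end
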